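(* Let $p$ be an odd prime and $\ell\geq 1$ an integer. Then for every $\tau\in\mathbb{H}$, $$\prod_{j=0}^{\ell}\ \prod_{\substack{0\leq v<p^j\\ \gcd(p^{\ell-j},v,p^j)=1}}\theta_3\Big(\frac{p^{\ell-j}\tau+2v}{p^j}\Big)=\theta_3^{\psi(p^\ell)}(\tau).$$
   Context: $\mathbb{H}=\{\tau\in\mathbb{C}:\Im(\tau)>0\}$. For $\tau\in\mathbb{H}$, $\theta_3(\tau)=1+2\sum_{\nu=1}^{\infty}e^{\pi i\nu^2\tau}$. For a positive integer $n$, $\psi(n)=n\prod_{p\mid n}(1+1/p)$, the product over primes dividing $n$; in particular $\psi(p^\ell)=p^\ell+p^{\ell-1}$. *)

theory Defs
  imports "HOL-Analysis.Analysis" "HOL-Computational_Algebra.Primes"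
begin

definition theta3 :: "complex \<Rightarrow> complex" where
  "theta3 \<tau> = 1 + 2 * (\<Sum>\<nu>. exp (complex_of_real pi * \<i> * of_nat ((Suc \<nu>)^2) * \<tau>))"

definition dedekind_psi :: "nat \<Rightarrow> nat" where
  "dedekind_psi n = nat \<lfloor>(of_nat n :: rat) * (\<Prod>p\<in>prime_factors n. 1 + 1 / of_nat p)\<rfloor>"

end

theory Submission
  imports Defs "HOL-Computational_Algebra.Polynomial"
begin


lemma prod_roots_poly:
  fixes \<omega> :: complex
  assumes p: "p > 0" and w1: "\<omega>^p = 1" and inj: "inj_on (\<lambda>u. \<omega>^u) {..<p}"
  shows "(\<Prod>u<p. w - \<omega>^u) = w^p - 1"
proof -
  define P1 where "P1 = (\<Prod>u<p. [:-(\<omega>^u),1:])"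
  define P2 :: "complex poly" where "P2 = monom 1 p - [:1:]"
  have degP1: "degree P1 = p" unfolding P1_def
    by (subst degree_prod_eq_sum_degree) auto
  have "coeff P1 p = lead_coeff P1" using degP1 by simp
  also have "\<dots> = 1" unfolding P1_def lead_coeff_prod by simp
  finally have c1: "coeff P1 p = 1" .
  have c2: "coeff P2 p = 1" using p by (simp add: P2_def coeff_monom coeff_pCons split: nat.splits)
  have d2: "degree P2 \<le> p" unfolding P2_def
    by (metis degree_diff_le degree_monom_le degree_pCons_0 le0 max.bounded_iff degree_diff_le_max dual_order.trans)
  have cardR: "card ((\<lambda>u. \<omega>^u) ` {..<p}) = p" using inj by (simp add: card_image)
  have "P1 = P2"
  proof (rule poly_eqI_degree_lead_coeff[of P1 p P2 "(\<lambda>u. \<omega>^u) ` {..<p}"])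
    show "coeff P1 p = coeff P2 p" using c1 c2 by simp
    show "p \<le> card ((\<lambda>u. \<omega>^u) ` {..<p})" using cardR by simp
    show "degree P1 \<le> p" using degP1 by simp
    show "degree P2 \<le> p" by (rule d2)
    fix z assume "z \<in> (\<lambda>u. \<omega>^u) ` {..<p}"
    then obtain u where u: "u < p" "z = \<omega>^u" by auto
    have "poly P1 z = 0" unfolding P1_def poly_prod using u
      by (intro prod_zero) auto
    moreover have "poly P2 z = 0" using u w1
      by (simp add: P2_def poly_monom power_mult[symmetric] mult.commute power_mult)
    ultimately show "poly P1 z = poly P2 z" by simp
  qed
  hence "poly P1 w = poly P2 w" by simp
  thus ?thesis by (simp add: P1_def P2_def poly_prod poly_monom)
qed

definition zeta :: "nat \<Rightarrow> complex" where "zeta p = exp (2 * of_real pi * \<i> / of_nat p)"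

lemma zeta_pow: "zeta p ^ k = exp (2 * of_real pi * \<i> * of_nat k / of_nat p)"
  unfolding zeta_def exp_of_nat_mult[symmetric] by (simp add: field_simps)

lemma zeta_pow_eq_1: assumes p: "p > 0" shows "zeta p ^ m = 1 \<longleftrightarrow> p dvd m"
  unfolding zeta_pow using complex_root_unity_eq_1[of p m] p by simp

lemma zeta_p: "p > 0 \<Longrightarrow> zeta p ^ p = 1"
  by (simp add: zeta_pow_eq_1)

lemma zeta_nz[simp]: "zeta p \<noteq> 0" by (simp add: zeta_def)

lemma zeta_prim:
  assumes p: "prime p" and k: "\<not> p dvd k"
  shows "inj_on (\<lambda>u. (zeta p ^ k) ^ u) {..<p}"
proof (rule inj_onI)
  have p0: "p > 0" using p prime_gt_0_nat by blast
  have *: False if ab: "a < b" "b < p" "(zeta p ^ k) ^ a = (zeta p ^ k) ^ b" for a b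
  proof -
    have nz: "(zeta p ^ k) ^ a \<noteq> 0" by simp
    have "(zeta p ^ k) ^ a * (zeta p ^ k) ^ (b - a) = (zeta p ^ k) ^ (a + (b - a))"
      by (simp only: power_add)
    also have "a + (b - a) = b" using ab by simp
    finally have "(zeta p ^ k) ^ a * (zeta p ^ k) ^ (b - a) = (zeta p ^ k) ^ a * 1"
      using ab by simp
    hence "(zeta p ^ k) ^ (b - a) = 1" using nz by (simp del: mult_1_right)
    hence "p dvd (k * (b - a))" using zeta_pow_eq_1[OF p0, of "k * (b - a)"] by (simp add: power_mult)
    hence "p dvd (b - a)" using k p by (simp add: prime_dvd_mult_iff)
    thus False using ab by (meson diff_less dvd_imp_le le0 not_le zero_less_diff less_imp_diff_less)
  qed
  fix a b assume "a \<in> {..<p}" "b \<in> {..<p}" "(zeta p ^ k) ^ a = (zeta p ^ k) ^ b"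
  thus "a = b" using *[of a b] *[of b a] by (metis lessThan_iff linorder_neqE_nat)
qed

lemma prod_one_minus:
  assumes p: "prime p" and k: "\<not> p dvd k"
  shows "(\<Prod>u<p. 1 - (zeta p ^ k) ^ u * w) = 1 - w ^ p"
proof (cases "w = 0")
  case True
  have "p > 0" using p prime_gt_0_nat by blast
  thus ?thesis using True by simp
next
  case False
  have p0: "p > 0" using p prime_gt_0_nat by blast
  have r: "(\<Prod>u<p. inverse w - (zeta p ^ k) ^ u) = inverse w ^ p - 1"
    by (rule prod_roots_poly[OF p0 _ zeta_prim[OF p k]])
       (simp add: power_mult[symmetric] mult.commute[of k] power_mult zeta_p[OF p0])
  have "(\<Prod>u<p. 1 - (zeta p ^ k) ^ u * w) = (\<Prod>u<p. w * (inverse w - (zeta p ^ k) ^ u))"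
    using False by (intro prod.cong) (auto simp: field_simps)
  also have "\<dots> = w ^ p * (inverse w ^ p - 1)" by (simp add: prod.distrib r)
  also have "\<dots> = 1 - w ^ p" using False by (simp add: field_simps power_inverse)
  finally show ?thesis .
qed

lemma prod_one_plus:
  assumes p: "prime p" "odd p" and k: "\<not> p dvd k"
  shows "(\<Prod>u<p. 1 + (zeta p ^ k) ^ u * w) = 1 + w ^ p"
  using prod_one_minus[OF p(1) k, of "-w"] p(2) by simp

definition fk :: "nat \<Rightarrow> complex \<Rightarrow> complex" where
  "fk k w = (if even k then 1 - w else (1 + w)^2)"

lemma prod_fk_ndvd:
  assumes p: "prime p" "odd p" and k: "\<not> p dvd k"
  shows "(\<Prod>u<p. fk k ((zeta p ^ u * x) ^ k)) = fk k (x ^ (p * k))"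
proof -
  have e: "(zeta p ^ u * x) ^ k = (zeta p ^ k) ^ u * x ^ k" for u
    by (simp add: power_mult_distrib flip: power_mult) (simp add: mult.commute)
  have xp: "x ^ (p * k) = (x ^ k) ^ p" by (simp add: power_mult mult.commute[of p])
  show ?thesis
  proof (cases "even k")
    case True
    thus ?thesis unfolding fk_def e xp using prod_one_minus[OF p(1) k] by simp
  next
    case False
    thus ?thesis unfolding fk_def e xp using prod_one_plus[OF p k, of "x ^ k"]
      by (simp add: prod_power_distrib[symmetric])
  qed
qed

lemma prod_fk_dvd:
  assumes p: "prime p" and k: "p dvd k"
  shows "(\<Prod>u<p. fk k ((zeta p ^ u * x) ^ k)) = fk k (x ^ k) ^ p"
proof -
  have p0: "p > 0" using p prime_gt_0_nat by blast
  obtain m where m: "k = p * m" using k by auto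
  have "(zeta p ^ u * x) ^ k = x ^ k" for u
  proof -
    have "(zeta p ^ u) ^ k = ((zeta p ^ p) ^ u) ^ m"
      by (simp add: m flip: power_mult) (simp add: mult_ac)
    thus ?thesis by (simp add: power_mult_distrib zeta_p[OF p0])
  qed
  thus ?thesis by simp
qed

definition FF :: "nat \<Rightarrow> complex \<Rightarrow> complex" where
  "FF N y = (\<Prod>k\<in>{1..2*N}. fk k (y ^ k))"

lemma fk_mult_odd: "odd p \<Longrightarrow> fk (p * m) = fk m"
  by (simp add: fk_def fun_eq_iff)

lemma fk_mult_odd': "odd p \<Longrightarrow> fk (m * p) = fk m"
  by (simp add: fk_def fun_eq_iff)

lemma FF_dvd_part:
  fixes p N :: nat
  assumes p: "prime p" "odd p"
  shows "(\<Prod>k\<in>{1..2*(p*N)} \<inter> {k. p dvd k}. h k) = (\<Prod>m\<in>{1..2*N}. h (p * m))"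
proof -
  have p0: "p > 0" using p prime_gt_0_nat by blast
  have "{1..2*(p*N)} \<inter> {k. p dvd k} = (\<lambda>m. p * m) ` {1..2*N}"
  proof (intro equalityI subsetI)
    fix k assume "k \<in> {1..2*(p*N)} \<inter> {k. p dvd k}"
    hence k: "p dvd k" "1 \<le> k" "k \<le> p * (2 * N)" by (auto simp: mult_ac)
    then obtain m where m: "k = p * m" by (auto elim: dvdE)
    have "1 \<le> m" using k(2) m by (cases m) auto
    moreover have "m \<le> 2 * N" using k(3) m p0 by simp
    ultimately show "k \<in> (\<lambda>m. p * m) ` {1..2*N}" using m by auto
  next
    fix k assume "k \<in> (\<lambda>m. p * m) ` {1..2*N}"
    then obtain m where mm: "m \<in> {1..2*N}" "k = p * m" by (rule imageE)
    hence "k = p * m" "1 \<le> m" "m \<le> 2 * N" by auto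
    thus "k \<in> {1..2*(p*N)} \<inter> {k. p dvd k}" using p0
      by (auto simp: mult_ac intro: order.trans[OF _ mult_le_mono1[of 1 p]])
  qed
  moreover have "inj_on (\<lambda>m. p * m) {1..2*N}" using p0 by (auto simp: inj_on_def)
  ultimately show ?thesis by (simp add: prod.reindex)
qed

lemma FF_T:
  assumes p: "prime p" "odd p"
  shows "(\<Prod>u<p. FF (p*N) (zeta p ^ u * x)) * FF N (x^(p*p)) = FF (p*N) (x^p) * FF N (x^p) ^ p"
proof -
  define K where "K = {1..2*(p*N)}"
  define D where "D = {k::nat. p dvd k}"
  have fin: "finite K" by (simp add: K_def)
  have "(\<Prod>u<p. FF (p*N) (zeta p ^ u * x)) = (\<Prod>k\<in>K. \<Prod>u<p. fk k ((zeta p ^ u * x) ^ k))"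
    unfolding FF_def K_def by (rule prod.swap)
  also have "\<dots> = (\<Prod>k\<in>K \<inter> D. \<Prod>u<p. fk k ((zeta p ^ u * x) ^ k)) *
                  (\<Prod>k\<in>K - D. \<Prod>u<p. fk k ((zeta p ^ u * x) ^ k))"
    by (rule prod.Int_Diff[OF fin])
  also have "(\<Prod>k\<in>K - D. \<Prod>u<p. fk k ((zeta p ^ u * x) ^ k)) = (\<Prod>k\<in>K - D. fk k ((x^p) ^ k))"
    by (intro prod.cong refl) (auto simp: D_def prod_fk_ndvd[OF p] power_mult)
  also have "(\<Prod>k\<in>K \<inter> D. \<Prod>u<p. fk k ((zeta p ^ u * x) ^ k)) = (\<Prod>k\<in>K \<inter> D. fk k (x ^ k) ^ p)"
    by (intro prod.cong refl) (auto simp: D_def prod_fk_dvd[OF p(1)])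
  also have "\<dots> = (\<Prod>m\<in>{1..2*N}. fk (p*m) (x ^ (p * m)) ^ p)"
    unfolding K_def D_def by (rule FF_dvd_part[OF p])
  also have "\<dots> = FF N (x^p) ^ p"
    by (simp add: FF_def fk_mult_odd[OF p(2)] prod_power_distrib power_mult)
  finally have L: "(\<Prod>u<p. FF (p*N) (zeta p ^ u * x)) = FF N (x^p) ^ p * (\<Prod>k\<in>K - D. fk k ((x^p) ^ k))" .
  have "FF (p*N) (x^p) = (\<Prod>k\<in>K \<inter> D. fk k ((x^p) ^ k)) * (\<Prod>k\<in>K - D. fk k ((x^p) ^ k))"
    unfolding FF_def K_def[symmetric] by (rule prod.Int_Diff[OF fin])
  also have "(\<Prod>k\<in>K \<inter> D. fk k ((x^p) ^ k)) = (\<Prod>m\<in>{1..2*N}. fk (p*m) ((x^p) ^ (p * m)))"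
    unfolding K_def D_def by (rule FF_dvd_part[OF p])
  also have "\<dots> = FF N (x^(p*p))"
    unfolding FF_def fk_mult_odd[OF p(2)]
    by (intro prod.cong refl) (simp add: power_mult[symmetric] mult_ac)
  finally have R: "FF (p*N) (x^p) = FF N (x^(p*p)) * (\<Prod>k\<in>K - D. fk k ((x^p) ^ k))" .
  show ?thesis unfolding L R by (simp add: mult_ac)
qed



definition qf :: "'a::comm_ring_1 \<Rightarrow> nat \<Rightarrow> 'a" where
  "qf t n = (\<Prod>i<n. 1 - t ^ Suc i)"

fun qbin :: "'a::comm_ring_1 \<Rightarrow> nat \<Rightarrow> nat \<Rightarrow> 'a" where
  "qbin t 0 0 = 1"
| "qbin t 0 (Suc k) = 0"
| "qbin t (Suc m) 0 = 1"
| "qbin t (Suc m) (Suc k) = qbin t m k + t ^ Suc k * qbin t m (Suc k)"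

lemma qbin_gt: "m < k \<Longrightarrow> qbin t m k = 0"
proof (induction m arbitrary: k)
  case 0 thus ?case by (cases k) auto
next
  case (Suc m) thus ?case by (cases k) auto
qed

lemma qbin_0 [simp]: "qbin t m 0 = 1"
  by (cases m) auto

lemma qf_Suc: "qf t (Suc n) = qf t n * (1 - t ^ Suc n)"
  by (simp add: qf_def)

lemma qbin_qf: "k \<le> m \<Longrightarrow> qbin t m k * qf t k * qf t (m - k) = qf t m"
proof (induction m arbitrary: k)
  case 0 thus ?case by (simp add: qf_def)
next
  case (Suc m)
  show ?case
  proof (cases k)
    case 0 thus ?thesis by (simp add: qf_def)
  next
    case (Suc j)
    hence j: "j \<le> m" using Suc.prems by simp
    have "qbin t m j * qf t (Suc j) * qf t (m - j) = (qbin t m j * qf t j * qf t (m - j)) * (1 - t ^ Suc j)"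
      by (simp only: qf_Suc mult_ac)
    hence A: "qbin t m j * qf t (Suc j) * qf t (m - j) = qf t m * (1 - t ^ Suc j)"
      using Suc.IH[OF j] by simp
    have B: "t ^ Suc j * qbin t m (Suc j) * qf t (Suc j) * qf t (m - j) = qf t m * (t ^ Suc j - t ^ Suc m)"
    proof (cases "j = m")
      case True thus ?thesis by (simp add: qbin_gt)
    next
      case False
      hence j': "Suc j \<le> m" using j by simp
      have e: "m - j = Suc (m - Suc j)" using j' by simp
      have "t ^ Suc j * qbin t m (Suc j) * qf t (Suc j) * qf t (m - j)
            = t ^ Suc j * (qbin t m (Suc j) * qf t (Suc j) * qf t (m - Suc j)) * (1 - t ^ (m - j))"
        unfolding e qf_Suc by (simp add: mult_ac)
      also have "\<dots> = qf t m * (t ^ Suc j * (1 - t ^ (m - j)))" using Suc.IH[OF j'] by (simp add: mult_ac)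
      also have "t ^ Suc j * (1 - t ^ (m - j)) = t ^ Suc j - t ^ Suc m"
        using j by (simp add: algebra_simps flip: power_add)
      finally show ?thesis .
    qed
    have "qbin t (Suc m) k * qf t k * qf t (Suc m - k)
          = qbin t m j * qf t (Suc j) * qf t (m - j) + t ^ Suc j * qbin t m (Suc j) * qf t (Suc j) * qf t (m - j)"
      by (simp add: Suc algebra_simps)
    also have "\<dots> = qf t m * (1 - t ^ Suc m)" unfolding A B by (simp add: algebra_simps)
    finally show ?thesis by (simp add: qf_Suc)
  qed
qed

lemma cauchy_qbin:
  fixes q z :: "'a::comm_ring_1"
  shows "(\<Prod>i<m. 1 + z * q ^ (2 * i)) = (\<Sum>k\<le>m. qbin (q^2) m k * q ^ (k * (k - 1)) * z ^ k)"
proof (induction m arbitrary: z)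
  case 0 thus ?case by simp
next
  case (Suc m)
  define c where "c k = qbin (q^2) m k * q ^ (k * (k - 1))" for k
  have "(\<Prod>i<Suc m. 1 + z * q ^ (2 * i)) = (1 + z) * (\<Prod>i<m. 1 + (z * q^2) * q ^ (2 * i))"
    unfolding prod.lessThan_Suc_shift by (simp add: power_add mult_ac power2_eq_square)
  also have "\<dots> = (1 + z) * (\<Sum>k\<le>m. c k * (z * q^2) ^ k)"
    by (simp add: Suc.IH c_def)
  also have "\<dots> = (\<Sum>k\<le>m. c k * q ^ (2*k) * z ^ k) + (\<Sum>k\<le>m. c k * q ^ (2*k) * z ^ Suc k)"
  proof -
    have e: "(z * q^2) ^ k = q ^ (2*k) * z ^ k" for k
      by (simp add: power_mult_distrib mult.commute flip: power_mult)
    have "(1+z)*(\<Sum>k\<le>m. c k*(z*q^2)^k) = (\<Sum>k\<le>m. c k*(z*q^2)^k + z*(c k*(z*q^2)^k))"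
      by (simp add: distrib_right sum.distrib sum_distrib_left)
    also have "\<dots> = (\<Sum>k\<le>m. c k * q^(2*k) * z^k + c k * q^(2*k) * z^Suc k)"
      by (rule sum.cong) (simp_all only: e mult_ac power_Suc)
    finally show ?thesis by (simp only: sum.distrib)
  qed
  also have "(\<Sum>k\<le>m. c k * q ^ (2*k) * z ^ k) = 1 + (\<Sum>k<m. c (Suc k) * q ^ (2 * Suc k) * z ^ Suc k)"
  proof -
    have "(\<Sum>k\<le>m. c k * q ^ (2*k) * z ^ k) = (\<Sum>k\<le>Suc m. c k * q ^ (2*k) * z ^ k)"
      by (simp add: c_def qbin_gt)
    also have "\<dots> = 1 + (\<Sum>k\<le>m. c (Suc k) * q ^ (2 * Suc k) * z ^ Suc k)"
      by (subst sum.atMost_Suc_shift) (simp add: c_def)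
    also have "(\<Sum>k\<le>m. c (Suc k) * q ^ (2 * Suc k) * z ^ Suc k) = (\<Sum>k<m. c (Suc k) * q ^ (2 * Suc k) * z ^ Suc k)"
      by (simp add: c_def qbin_gt lessThan_Suc_atMost[symmetric])
    finally show ?thesis .
  qed
  also have "(\<Sum>k\<le>Suc m. qbin (q^2) (Suc m) k * q ^ (k * (k - 1)) * z ^ k)
     = 1 + (\<Sum>k\<le>m. qbin (q^2) m k * q ^ ((Suc k) * k) * z ^ Suc k)
         + (\<Sum>k\<le>m. (q^2) ^ Suc k * qbin (q^2) m (Suc k) * q ^ ((Suc k) * k) * z ^ Suc k)"
    by (subst sum.atMost_Suc_shift) (simp add: algebra_simps sum.distrib)
  moreover have "(\<Sum>k\<le>m. qbin (q^2) m k * q ^ ((Suc k) * k) * z ^ Suc k) = (\<Sum>k\<le>m. c k * q ^ (2*k) * z ^ Suc k)"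
  proof (intro sum.cong refl)
    fix k
    have "Suc k * k = k * (k - 1) + 2 * k" by (cases k) (simp_all add: algebra_simps)
    hence h: "q ^ (Suc k * k) = q ^ (k * (k - 1)) * q ^ (2 * k)" by (simp only: power_add)
    show "qbin (q^2) m k * q ^ ((Suc k) * k) * z ^ Suc k = c k * q ^ (2*k) * z ^ Suc k"
      unfolding h c_def by (simp only: mult_ac)
  qed
  moreover have "(\<Sum>k\<le>m. (q^2) ^ Suc k * qbin (q^2) m (Suc k) * q ^ ((Suc k) * k) * z ^ Suc k)
        = (\<Sum>k<m. c (Suc k) * q ^ (2 * Suc k) * z ^ Suc k)"
  proof -
    have "(\<Sum>k\<le>m. (q^2) ^ Suc k * qbin (q^2) m (Suc k) * q ^ ((Suc k) * k) * z ^ Suc k)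
        = (\<Sum>k<m. (q^2) ^ Suc k * qbin (q^2) m (Suc k) * q ^ ((Suc k) * k) * z ^ Suc k)"
      unfolding lessThan_Suc_atMost[symmetric] sum.lessThan_Suc by (simp add: qbin_gt)
    also have "\<dots> = (\<Sum>k<m. c (Suc k) * q ^ (2 * Suc k) * z ^ Suc k)"
    proof (rule sum.cong[OF refl])
      fix k
      have a: "(q^2) ^ Suc k = q ^ (2 * Suc k)" by (simp only: power_mult)
      have b: "Suc k * (Suc k - 1) = Suc k * k" by simp
      show "(q^2) ^ Suc k * qbin (q^2) m (Suc k) * q ^ ((Suc k) * k) * z ^ Suc k = c (Suc k) * q ^ (2 * Suc k) * z ^ Suc k"
        unfolding c_def a b by (simp only: mult_ac)
    qed
    finally show ?thesis .
  qed
  ultimately show ?case by (simp add: algebra_simps)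
qed

lemma qbin_norm: "norm (qbin (t::complex) m k) \<le> qbin (norm t) m k"
proof (induction m arbitrary: k)
  case 0 thus ?case by (cases k) auto
next
  case (Suc m)
  show ?case
  proof (cases k)
    case 0 thus ?thesis by simp
  next
    case (Suc j)
    have "norm (qbin t (Suc m) k) \<le> norm (qbin t m j) + norm t ^ Suc j * norm (qbin t m (Suc j))"
      by (simp add: Suc norm_mult norm_power norm_triangle_ineq del: power_Suc
          | rule order.trans[OF norm_triangle_ineq])+
    also have "\<dots> \<le> qbin (norm t) m j + norm t ^ Suc j * qbin (norm t) m (Suc j)"
      by (intro add_mono mult_left_mono Suc.IH) auto
    finally show ?thesis by (simp add: Suc)
  qed
qed

lemma prod_lessThan_add: fixes m n :: nat shows "(\<Prod>i<m+n. f i) = (\<Prod>i<m. f i) * (\<Prod>i<n. f (m+i))"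
  by (induction n) (simp_all add: mult_ac)

definition op :: "complex \<Rightarrow> nat \<Rightarrow> complex" where
  "op q n = (\<Prod>i<n. 1 + q ^ (2*i+1))"

definition EE :: "nat \<Rightarrow> nat \<Rightarrow> nat" where
  "EE k n = (if k \<le> n then (n - k)^2 else (k - n)^2)"

lemma EE_arith: assumes "n \<ge> 1" shows "EE k n + (2*n-1)*k = n^2 + k*(k-1)"
proof (cases "k \<le> n")
  case True
  then obtain d where n: "n = k + d" using le_Suc_ex by blast
  show ?thesis
  proof (cases k)
    case 0 thus ?thesis using True by (simp add: EE_def n)
  next
    case (Suc j) thus ?thesis using True by (simp add: EE_def n algebra_simps power2_eq_square)
  qed
next
  case False
  then obtain d where k: "k = n + Suc d" by (metis add_Suc_right less_imp_Suc_add not_le)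
  obtain m where n: "n = Suc m" using assms by (cases n) auto
  show ?thesis using False by (simp add: EE_def k n algebra_simps power2_eq_square)
qed

lemma prod_odd_pow: "(\<Prod>i<n. (q::complex) ^ (2*i+1)) = q ^ (n^2)"
proof (induction n)
  case 0 thus ?case by simp
next
  case (Suc n)
  have "Suc n ^ 2 = n^2 + (2*n+1)" by (simp add: power2_eq_square)
  thus ?case using Suc by (simp add: power_add)
qed

lemma finite_jacobi:
  assumes q: "q \<noteq> 0"
  shows "op q n ^ 2 = (\<Sum>k\<le>2*n. qbin (q^2) (2*n) k * q ^ EE k n)"
proof (cases "n = 0")
  case True thus ?thesis by (simp add: op_def EE_def)
next
  case False
  hence n1: "n \<ge> 1" by simp
  define w where "w = inverse q ^ (2*n-1)"
  have wq: "w * q ^ (2*n-1) = 1" using q by (simp add: w_def power_inverse)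
  have C: "(\<Prod>i<2*n. 1 + w * q ^ (2 * i)) = (\<Sum>k\<le>2*n. qbin (q^2) (2*n) k * q ^ (k * (k - 1)) * w ^ k)"
    by (rule cauchy_qbin)
  have P1: "(\<Prod>i<n. 1 + w * q ^ (2 * (n + i))) = op q n"
    unfolding op_def
  proof (rule prod.cong[OF refl])
    fix i
    have h: "2 * (n + i) = (2*n-1) + (2*i+1)" using n1 by simp
    have "w * q ^ (2 * (n + i)) = (w * q ^ (2*n-1)) * q ^ (2*i+1)" by (simp only: h power_add mult.assoc)
    hence "w * q ^ (2 * (n + i)) = q ^ (2*i+1)" unfolding wq by simp
    thus "1 + w * q ^ (2 * (n + i)) = 1 + q ^ (2*i+1)" by simp
  qed
  have P2: "q ^ (n^2) * (\<Prod>i<n. 1 + w * q ^ (2 * i)) = op q n"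
  proof -
    have "(\<Prod>i<n. 1 + w * q ^ (2 * i)) = (\<Prod>i<n. 1 + w * q ^ (2 * (n - Suc i)))"
      by (rule prod.nat_diff_reindex[symmetric])
    also have "\<dots> = (\<Prod>i<n. 1 + inverse (q ^ (2*i+1)))"
    proof (rule prod.cong[OF refl])
      fix i assume "i \<in> {..<n}"
      hence h: "(2*n-1) = 2 * (n - Suc i) + (2*i+1)" by simp
      have "w * q ^ (2 * (n - Suc i)) * q ^ (2*i+1) = w * q ^ (2*n-1)" by (simp only: h power_add mult.assoc)
      hence "w * q ^ (2 * (n - Suc i)) * q ^ (2*i+1) = 1" unfolding wq .
      hence "w * q ^ (2 * (n - Suc i)) = inverse (q ^ (2*i+1))" using q by (simp add: field_simps)
      thus "1 + w * q ^ (2 * (n - Suc i)) = 1 + inverse (q ^ (2*i+1))" by simp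
    qed
    finally have X: "(\<Prod>i<n. 1 + w * q ^ (2 * i)) = (\<Prod>i<n. 1 + inverse (q ^ (2*i+1)))" .
    have "q ^ (n^2) * (\<Prod>i<n. 1 + w * q ^ (2 * i)) = (\<Prod>i<n. q ^ (2*i+1)) * (\<Prod>i<n. 1 + inverse (q ^ (2*i+1)))"
      unfolding X prod_odd_pow ..
    also have "\<dots> = (\<Prod>i<n. q ^ (2*i+1) * (1 + inverse (q ^ (2*i+1))))" by (simp add: prod.distrib)
    also have "\<dots> = op q n" unfolding op_def using q by (intro prod.cong) (auto simp: field_simps)
    finally show ?thesis .
  qed
  have "op q n ^ 2 = q ^ (n^2) * (\<Prod>i<2*n. 1 + w * q ^ (2 * i))"
  proof -
    have "(\<Prod>i<2*n. 1 + w * q ^ (2 * i)) = (\<Prod>i<n. 1 + w * q ^ (2 * i)) * (\<Prod>i<n. 1 + w * q ^ (2 * (n + i)))"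
      using prod_lessThan_add[of "\<lambda>i. 1 + w * q ^ (2 * i)" n n] by (simp add: mult_2)
    thus ?thesis using P1 P2 by (simp add: power2_eq_square mult_ac)
  qed
  also have "\<dots> = (\<Sum>k\<le>2*n. qbin (q^2) (2*n) k * (q ^ (n^2) * q ^ (k * (k - 1)) * w ^ k))"
    unfolding C by (simp add: sum_distrib_left mult_ac)
  also have "\<dots> = (\<Sum>k\<le>2*n. qbin (q^2) (2*n) k * q ^ EE k n)"
  proof (rule sum.cong[OF refl])
    fix k
    have "q ^ (n^2) * q ^ (k * (k - 1)) = q ^ EE k n * q ^ ((2*n-1)*k)"
      using EE_arith[OF n1, of k] by (simp flip: power_add)
    moreover have "q ^ ((2*n-1)*k) * w ^ k = (w * q^(2*n-1)) ^ k"
      by (simp only: power_mult power_mult_distrib mult.commute flip: power_mult)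
    hence "q ^ ((2*n-1)*k) * w ^ k = 1" unfolding wq by simp
    ultimately have "q ^ (n^2) * q ^ (k * (k - 1)) * w ^ k = q ^ EE k n"
      by (metis mult.assoc mult.right_neutral)
    thus "qbin (q^2) (2*n) k * (q ^ (n^2) * q ^ (k * (k - 1)) * w ^ k) = qbin (q^2) (2*n) k * q ^ EE k n" by simp
  qed
  finally show ?thesis .
qed



lemma cprod_lim:
  fixes f :: "nat \<Rightarrow> 'a::{real_normed_field,banach}"
  assumes "summable (\<lambda>i. norm (f i - 1))" "\<And>i. f i \<noteq> 0"
  shows "(\<lambda>n. \<Prod>i<n. f i) \<longlonglongrightarrow> prodinf f \<and> prodinf f \<noteq> 0"
proof -
  have cp: "convergent_prod f"
    by (rule abs_convergent_prod_imp_convergent_prod[OF summable_imp_abs_convergent_prod[OF assms(1)]])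
  have "(\<lambda>n. \<Prod>i\<le>n. f i) \<longlonglongrightarrow> prodinf f" by (rule convergent_prod_LIMSEQ[OF cp])
  hence "(\<lambda>n. \<Prod>i<n. f i) \<longlonglongrightarrow> prodinf f"
    using LIMSEQ_lessThan_iff_atMost[of "prod f"] by simp
  thus ?thesis using prodinf_nonzero[OF cp assms(2)] by simp
qed

definition Qinf :: "'a::{real_normed_field,banach} \<Rightarrow> 'a" where
  "Qinf t = prodinf (\<lambda>i. 1 - t ^ Suc i)"

lemma factor_nz:
  fixes t :: "'a::real_normed_field"
  assumes "norm t < 1" shows "1 - t ^ Suc i \<noteq> 0"
proof
  assume "1 - t ^ Suc i = 0"
  hence "norm (t ^ Suc i) = 1" by (metis eq_iff_diff_eq_0 norm_one)
  moreover have "norm (t ^ Suc i) < 1" using assms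
    unfolding norm_power using assms by (subst power_less_one_iff) auto
  ultimately show False by simp
qed

lemma qf_nz:
  fixes t :: "'a::real_normed_field"
  assumes "norm t < 1" shows "qf t n \<noteq> 0"
  unfolding qf_def using factor_nz[OF assms] by (simp add: prod_zero_iff)

lemma qf_lim:
  fixes t :: "'a::{real_normed_field,banach}"
  assumes t: "norm t < 1"
  shows "qf t \<longlonglongrightarrow> Qinf t" "Qinf t \<noteq> 0"
proof -
  have s: "summable (\<lambda>i. norm ((1 - t ^ Suc i) - 1))"
  proof -
    have "summable (\<lambda>i. norm t ^ i)" using t by (intro summable_geometric) simp
    hence "summable (\<lambda>i. norm t * norm t ^ i)" by (rule summable_mult)
    thus ?thesis by (simp add: norm_power norm_mult)
  qed
  have "(\<lambda>n. \<Prod>i<n. 1 - t ^ Suc i) \<longlonglongrightarrow> Qinf t \<and> Qinf t \<noteq> 0"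
    unfolding Qinf_def by (rule cprod_lim[OF s factor_nz[OF t]])
  thus "qf t \<longlonglongrightarrow> Qinf t" "Qinf t \<noteq> 0" by (simp_all add: qf_def[abs_def])
qed

lemma qbin_closed:
  fixes t :: "'a::real_normed_field"
  assumes "norm t < 1" "k \<le> m"
  shows "qbin t m k = qf t m / (qf t k * qf t (m - k))"
  using qbin_qf[OF assms(2), of t] qf_nz[OF assms(1)] by (simp add: field_simps)

lemma qbin_sym:
  fixes t :: "'a::real_normed_field"
  assumes "norm t < 1" "k \<le> m"
  shows "qbin t m (m - k) = qbin t m k"
  using qbin_closed[OF assms] qbin_closed[OF assms(1), of "m - k" m] assms(2) by (simp add: mult.commute)

lemma real_bounds:
  fixes r :: real
  assumes r: "0 \<le> r" "r < 1"
  shows "0 < Qinf r" "\<And>n. Qinf r \<le> qf r n" "\<And>n. qf r n \<le> 1" "\<And>n. 0 < qf r n"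
proof -
  have fpos: "0 < 1 - r ^ Suc i" "1 - r ^ Suc i \<le> 1" for i
    using r by (simp_all add: power_less_one_iff del: power_Suc)
  show pos: "0 < qf r n" for n unfolding qf_def using fpos by (intro prod_pos) auto
  show "qf r n \<le> 1" for n unfolding qf_def using fpos by (intro prod_le_1) (auto intro: less_imp_le)
  have nr: "norm r < 1" using r by simp
  have dec: "decseq (qf r)"
  proof (rule decseq_SucI)
    fix n show "qf r (Suc n) \<le> qf r n"
      unfolding qf_Suc using pos[of n] fpos[of n] by (simp add: mult_left_le)
  qed
  show le: "Qinf r \<le> qf r n" for n by (rule decseq_ge[OF dec qf_lim(1)[OF nr]])
  have "0 \<le> Qinf r" using qf_lim(1)[OF nr] pos by (intro LIMSEQ_le_const) (auto intro: less_imp_le)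
  thus "0 < Qinf r" using qf_lim(2)[OF nr] by simp
qed

lemma qbin_bound:
  fixes t :: complex
  assumes t: "norm t < 1"
  shows "norm (qbin t m k) \<le> 1 / (Qinf (norm t))^2"
proof -
  define r where "r = norm t"
  have r: "0 \<le> r" "r < 1" using t by (simp_all add: r_def)
  note b = real_bounds[OF r]
  have "qbin r m k \<le> 1 / (Qinf r)^2"
  proof (cases "k \<le> m")
    case True
    have "qbin r m k = qf r m / (qf r k * qf r (m - k))"
      using qbin_closed[of r k m] r True by simp
    also have "\<dots> \<le> 1 / (qf r k * qf r (m - k))"
      using b by (intro divide_right_mono) (auto intro: mult_pos_pos less_imp_le)
    also have "\<dots> \<le> 1 / (Qinf r * Qinf r)"
      using b by (intro divide_left_mono mult_mono) (auto intro: mult_pos_pos less_imp_le)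
    finally show ?thesis by (simp add: power2_eq_square)
  next
    case False thus ?thesis by (simp add: qbin_gt)
  qed
  thus ?thesis using qbin_norm[of t m k] by (simp add: r_def)
qed



definition th :: "complex \<Rightarrow> complex" where
  "th q = 1 + 2 * (\<Sum>\<nu>. q ^ ((Suc \<nu>)^2))"

lemma qbin_shift_lim:
  fixes t :: complex
  assumes t: "norm t < 1"
  shows "(\<lambda>n. qbin t (2*n) (n + c)) \<longlonglongrightarrow> 1 / Qinf t"
proof -
  note L = qf_lim[OF t]
  have sm: "strict_mono (\<lambda>n::nat. 2*n)" by (simp add: strict_mono_def)
  have l1: "(\<lambda>n. qf t (2*n)) \<longlonglongrightarrow> Qinf t"
    by (rule filterlim_compose[OF L(1) filterlim_subseq[OF sm]])
  have l2: "(\<lambda>n. qf t (n + c)) \<longlonglongrightarrow> Qinf t"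
    by (rule LIMSEQ_ignore_initial_segment[OF L(1)])
  have l3: "(\<lambda>n. qf t (n - c)) \<longlonglongrightarrow> Qinf t"
    by (rule filterlim_compose[OF L(1) filterlim_minus_const_nat_at_top])
  have "(\<lambda>n. qf t (2*n) / (qf t (n + c) * qf t (n - c))) \<longlonglongrightarrow> Qinf t / (Qinf t * Qinf t)"
    using L(2) by (intro tendsto_divide tendsto_mult l1 l2 l3) auto
  moreover have "Qinf t / (Qinf t * Qinf t) = 1 / Qinf t" using L(2) by simp
  ultimately have A: "(\<lambda>n. qf t (2*n) / (qf t (n + c) * qf t (n - c))) \<longlonglongrightarrow> 1 / Qinf t" by simp
  have "eventually (\<lambda>n. qf t (2*n) / (qf t (n + c) * qf t (n - c)) = qbin t (2*n) (n + c)) sequentially"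
  proof (rule eventually_sequentiallyI[of c])
    fix n assume "c \<le> n"
    hence "n + c \<le> 2 * n" "2 * n - (n + c) = n - c" by auto
    thus "qf t (2*n) / (qf t (n + c) * qf t (n - c)) = qbin t (2*n) (n + c)"
      using qbin_closed[OF t, of "n + c" "2*n"] by simp
  qed
  from tendsto_cong[OF this] A show ?thesis by simp
qed

lemma sum_lessThan_add: fixes m n :: nat shows "(\<Sum>i<m+n. f i) = (\<Sum>i<m. f i) + (\<Sum>i<n. f (m+i))"
  by (induction n) (simp_all add: add_ac)

lemma S_decomp:
  fixes q :: complex
  assumes q: "norm q < 1"
  shows "(\<Sum>k\<le>2*n. qbin (q^2) (2*n) k * q ^ EE k n)
         = qbin (q^2) (2*n) n + 2 * (\<Sum>\<nu><n. qbin (q^2) (2*n) (n + Suc \<nu>) * q ^ ((Suc \<nu>)^2))"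
proof -
  define f where "f k = qbin (q^2) (2*n) k * q ^ EE k n" for k
  have t: "norm (q^2) < 1" using q by (simp add: norm_power power_less_one_iff)
  have "{..2*n} = {..<n + Suc n}" by auto
  hence "(\<Sum>k\<le>2*n. f k) = (\<Sum>k<n + Suc n. f k)" by (simp only:)
  also have "\<dots> = (\<Sum>k<n. f k) + (\<Sum>i<Suc n. f (n + i))" by (rule sum_lessThan_add)
  also have "(\<Sum>i<Suc n. f (n + i)) = f n + (\<Sum>\<nu><n. f (n + Suc \<nu>))"
    by (subst sum.lessThan_Suc_shift) simp
  also have "(\<Sum>k<n. f k) = (\<Sum>\<nu><n. f (n - Suc \<nu>))" by (rule sum.nat_diff_reindex[symmetric])
  also have "\<dots> = (\<Sum>\<nu><n. f (n + Suc \<nu>))"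
  proof (rule sum.cong[OF refl])
    fix \<nu> assume "\<nu> \<in> {..<n}"
    hence nu: "\<nu> < n" by simp
    have "qbin (q^2) (2*n) (2*n - (n + Suc \<nu>)) = qbin (q^2) (2*n) (n + Suc \<nu>)"
      using nu by (intro qbin_sym[OF t]) simp
    moreover have "2*n - (n + Suc \<nu>) = n - Suc \<nu>" by simp
    moreover have "EE (n - Suc \<nu>) n = EE (n + Suc \<nu>) n" using nu by (simp add: EE_def)
    ultimately show "f (n - Suc \<nu>) = f (n + Suc \<nu>)" by (simp add: f_def)
  qed
  finally have X: "(\<Sum>k\<le>2*n. f k) = f n + 2 * (\<Sum>\<nu><n. f (n + Suc \<nu>))"
    by (simp only: mult_2 add_ac)
  have fn: "f n = qbin (q^2) (2*n) n" by (simp add: f_def EE_def)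
  have fs: "f (n + Suc \<nu>) = qbin (q^2) (2*n) (n + Suc \<nu>) * q ^ ((Suc \<nu>)^2)" for \<nu>
    by (simp add: f_def EE_def)
  have Y: "(\<Sum>\<nu><n. f (n + Suc \<nu>)) = (\<Sum>\<nu><n. qbin (q^2) (2*n) (n + Suc \<nu>) * q ^ ((Suc \<nu>)^2))"
    by (simp only: fs)
  show ?thesis using X unfolding Y fn by (simp only: f_def)
qed

lemma summable_sq_pow:
  fixes q :: complex assumes q: "norm q < 1"
  shows "summable (\<lambda>\<nu>. norm q ^ ((Suc \<nu>)^2))"
proof (rule summable_comparison_test[OF _ summable_geometric[of "norm q"]])
  show "norm (norm q) < 1" using q by simp
  show "\<exists>N. \<forall>n\<ge>N. norm (norm q ^ (Suc n)\<^sup>2) \<le> norm q ^ n"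
  proof (intro exI[of _ 0] allI impI)
    fix n :: nat
    have "n \<le> (Suc n)^2" by (simp add: power2_eq_square)
    hence "norm q ^ ((Suc n)^2) \<le> norm q ^ n" using q by (intro power_decreasing) auto
    thus "norm (norm q ^ (Suc n)\<^sup>2) \<le> norm q ^ n" by simp
  qed
qed



lemma S_lim:
  fixes q :: complex
  assumes q: "norm q < 1"
  shows "(\<lambda>n. \<Sum>k\<le>2*n. qbin (q^2) (2*n) k * q ^ EE k n) \<longlonglongrightarrow> th q / Qinf (q^2)"
proof -
  define t where "t = q^2"
  have t: "norm t < 1" using q by (simp add: t_def norm_power power_less_one_iff)
  define a where "a \<nu> n = (if \<nu> < n then qbin t (2*n) (n + Suc \<nu>) * q ^ ((Suc \<nu>)^2) else 0)" for \<nu> n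
  define b where "b \<nu> = q ^ ((Suc \<nu>)^2) * (1 / Qinf t)" for \<nu>
  define B where "B = 1 / (Qinf (norm t))^2"
  define M where "M \<nu> = B * norm q ^ ((Suc \<nu>)^2)" for \<nu>
  have lim_a: "(\<lambda>n. a \<nu> n) \<longlonglongrightarrow> b \<nu>" for \<nu>
  proof -
    have "(\<lambda>n. qbin t (2*n) (n + Suc \<nu>) * q ^ ((Suc \<nu>)^2)) \<longlonglongrightarrow> 1 / Qinf t * q ^ ((Suc \<nu>)^2)"
      by (intro tendsto_mult qbin_shift_lim[OF t] tendsto_const)
    moreover have "eventually (\<lambda>n. qbin t (2*n) (n + Suc \<nu>) * q ^ ((Suc \<nu>)^2) = a \<nu> n) sequentially"
      by (rule eventually_sequentiallyI[of "Suc \<nu>"]) (simp add: a_def)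
    ultimately show ?thesis using tendsto_cong by (fastforce simp: b_def mult.commute)
  qed
  have bound: "eventually (\<lambda>(\<nu>,n). norm (a \<nu> n) \<le> M \<nu>) (at_top \<times>\<^sub>F sequentially)"
  proof (rule always_eventually, safe)
    fix \<nu> n
    have "norm (qbin t (2*n) (n + Suc \<nu>)) \<le> B" unfolding B_def by (rule qbin_bound[OF t])
    hence "norm (qbin t (2*n) (n + Suc \<nu>) * q ^ ((Suc \<nu>)^2)) \<le> B * norm q ^ ((Suc \<nu>)^2)"
      by (simp add: norm_mult norm_power mult_right_mono)
    moreover have "0 \<le> B" by (simp add: B_def)
    ultimately show "norm (a \<nu> n) \<le> M \<nu>" by (simp add: a_def M_def)
  qed
  have sM: "summable M" unfolding M_def by (intro summable_mult summable_sq_pow[OF q])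
  have T: "((\<lambda>n. suminf (\<lambda>\<nu>. a \<nu> n)) \<longlonglongrightarrow> suminf b)"
    using tannerys_theorem[OF lim_a bound sM] by simp
  have sa: "suminf (\<lambda>\<nu>. a \<nu> n) = (\<Sum>\<nu><n. qbin t (2*n) (n + Suc \<nu>) * q ^ ((Suc \<nu>)^2))" for n
    by (subst suminf_finite[of "{..<n}"]) (auto simp: a_def)
  have sq: "summable (\<lambda>\<nu>. q ^ ((Suc \<nu>)^2))"
    by (rule summable_norm_cancel) (simp add: norm_power summable_sq_pow[OF q])
  have sb: "suminf b = (\<Sum>\<nu>. q ^ ((Suc \<nu>)^2)) * (1 / Qinf t)"
    unfolding b_def by (rule suminf_mult2[OF sq, symmetric])
  have "(\<lambda>n. qbin t (2*n) n + 2 * suminf (\<lambda>\<nu>. a \<nu> n)) \<longlonglongrightarrow> 1 / Qinf t + 2 * suminf b"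
    using qbin_shift_lim[OF t, of 0] by (intro tendsto_add tendsto_mult T tendsto_const) simp
  moreover have "1 / Qinf t + 2 * suminf b = th q / Qinf t"
    unfolding sb th_def by (simp add: add_divide_distrib)
  ultimately show ?thesis unfolding sa S_decomp[OF q] t_def by simp
qed

lemma FF_eq: "FF N y = qf (y^2) N * op y N ^ 2"
proof (induction N)
  case 0 thus ?case by (simp add: FF_def qf_def op_def)
next
  case (Suc N)
  have s: "{1..2 * Suc N} = insert (Suc (Suc (2*N))) (insert (Suc (2*N)) {1..2*N})"
    by (simp add: atLeastAtMostSuc_conv)
  have "FF (Suc N) y = FF N y * (fk (Suc (2*N)) (y ^ Suc (2*N)) * fk (Suc (Suc (2*N))) (y ^ Suc (Suc (2*N))))"
    unfolding FF_def s by (simp add: mult_ac)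
  also have "fk (Suc (2*N)) (y ^ Suc (2*N)) = (1 + y ^ (2*N+1))^2" by (simp add: fk_def)
  also have "fk (Suc (Suc (2*N))) (y ^ Suc (Suc (2*N))) = 1 - (y^2) ^ Suc N"
  proof -
    have "(y^2) ^ Suc N = y ^ (Suc (Suc (2*N)))" by (simp only: power_mult[symmetric]) simp
    thus ?thesis by (simp add: fk_def)
  qed
  finally show ?case using Suc.IH by (simp add: qf_Suc op_def power2_eq_square mult_ac)
qed

lemma op_lim:
  fixes q :: complex assumes q: "norm q < 1"
  shows "op q \<longlonglongrightarrow> prodinf (\<lambda>i. 1 + q ^ (2*i+1))" "prodinf (\<lambda>i. 1 + q ^ (2*i+1)) \<noteq> 0"
proof -
  have s: "summable (\<lambda>i. norm ((1 + q ^ (2*i+1)) - 1))"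
  proof (rule summable_comparison_test[OF _ summable_geometric[of "norm q"]])
    show "norm (norm q) < 1" using q by simp
    show "\<exists>N. \<forall>n\<ge>N. norm (norm ((1 + q ^ (2*n+1)) - 1)) \<le> norm q ^ n"
    proof (intro exI[of _ 0] allI impI)
      fix n :: nat
      have "norm q ^ (2*n+1) \<le> norm q ^ n" using q by (intro power_decreasing) auto
      thus "norm (norm ((1 + q ^ (2*n+1)) - 1)) \<le> norm q ^ n" by (simp add: norm_power norm_mult)
    qed
  qed
  have nz: "1 + q ^ (2*i+1) \<noteq> 0" for i
  proof
    assume "1 + q ^ (2*i+1) = 0"
    hence "q ^ (2*i+1) = -1" by (simp add: add_eq_0_iff)
    hence "norm q ^ (2*i+1) = 1" by (metis norm_minus_cancel norm_one norm_power)
    moreover have "norm q ^ (2*i+1) < 1" using q by (subst power_less_one_iff) auto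
    ultimately show False by simp
  qed
  have "(\<lambda>n. \<Prod>i<n. 1 + q ^ (2*i+1)) \<longlonglongrightarrow> prodinf (\<lambda>i. 1 + q ^ (2*i+1)) \<and> prodinf (\<lambda>i. 1 + q ^ (2*i+1)) \<noteq> 0"
    by (rule cprod_lim[OF s nz])
  thus "op q \<longlonglongrightarrow> prodinf (\<lambda>i. 1 + q ^ (2*i+1))" "prodinf (\<lambda>i. 1 + q ^ (2*i+1)) \<noteq> 0"
    by (simp_all add: op_def[abs_def])
qed

lemma FF_lim:
  fixes y :: complex
  assumes y: "norm y < 1" "y \<noteq> 0"
  shows "(\<lambda>N. FF N y) \<longlonglongrightarrow> th y" "th y \<noteq> 0"
proof -
  have t: "norm (y^2) < 1" using y by (simp add: norm_power power_less_one_iff)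
  have e: "FF N y = qf (y^2) N * (\<Sum>k\<le>2*N. qbin (y^2) (2*N) k * y ^ EE k N)" for N
    unfolding FF_eq finite_jacobi[OF y(2)] ..
  have "(\<lambda>N. FF N y) \<longlonglongrightarrow> Qinf (y^2) * (th y / Qinf (y^2))"
    unfolding e by (intro tendsto_mult qf_lim(1)[OF t] S_lim[OF y(1)])
  thus l: "(\<lambda>N. FF N y) \<longlonglongrightarrow> th y" using qf_lim(2)[OF t] by simp
  have "(\<lambda>N. FF N y) \<longlonglongrightarrow> Qinf (y^2) * prodinf (\<lambda>i. 1 + y ^ (2*i+1)) ^ 2"
    unfolding FF_eq by (intro tendsto_mult tendsto_power qf_lim(1)[OF t] op_lim(1)[OF y(1)])
  hence "th y = Qinf (y^2) * prodinf (\<lambda>i. 1 + y ^ (2*i+1)) ^ 2" using l LIMSEQ_unique by blast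
  thus "th y \<noteq> 0" using qf_lim(2)[OF t] op_lim(2)[OF y(1)] by simp
qed



lemma norm_zeta_pow [simp]: "norm (zeta p ^ u) = 1"
  by (simp add: zeta_def norm_power norm_exp_eq_Re)

lemma th_T:
  assumes p: "prime p" "odd p" and x: "norm x < 1" "x \<noteq> 0"
  shows "(\<Prod>u<p. th (zeta p ^ u * x)) * th (x^(p*p)) = th (x^p) ^ Suc p"
proof -
  have p0: "p > 0" using p prime_gt_0_nat by blast
  have nx: "norm (x ^ k) < 1" if "k > 0" for k using x that by (simp add: norm_power power_less_one_iff)
  have nzx: "x ^ k \<noteq> 0" for k using x by simp
  have sm: "strict_mono (\<lambda>N. p * N)" using p0 by (simp add: strict_mono_def)
  have lu: "(\<lambda>N. FF (p*N) (zeta p ^ u * x)) \<longlonglongrightarrow> th (zeta p ^ u * x)" for u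
  proof -
    have "norm (zeta p ^ u * x) < 1" "zeta p ^ u * x \<noteq> 0" using x by (simp_all add: norm_mult)
    from FF_lim(1)[OF this] show ?thesis by (rule filterlim_compose[OF _ filterlim_subseq[OF sm]])
  qed
  have l1: "(\<lambda>N. (\<Prod>u<p. FF (p*N) (zeta p ^ u * x)) * FF N (x^(p*p))) \<longlonglongrightarrow>
            (\<Prod>u<p. th (zeta p ^ u * x)) * th (x^(p*p))"
  proof (rule tendsto_mult)
    show "(\<lambda>N. \<Prod>u<p. FF (p*N) (zeta p ^ u * x)) \<longlonglongrightarrow> (\<Prod>u<p. th (zeta p ^ u * x))"
      by (rule tendsto_prod) (rule lu)
    show "(\<lambda>N. FF N (x^(p*p))) \<longlonglongrightarrow> th (x^(p*p))"
      by (rule FF_lim(1)[OF nx nzx]) (use p0 in simp)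
  qed
  have l2: "(\<lambda>N. FF (p*N) (x^p) * FF N (x^p) ^ p) \<longlonglongrightarrow> th (x^p) * th (x^p) ^ p"
  proof (rule tendsto_mult)
    have l: "(\<lambda>N. FF N (x^p)) \<longlonglongrightarrow> th (x^p)" by (rule FF_lim(1)[OF nx nzx]) (use p0 in simp)
    show "(\<lambda>N. FF (p*N) (x^p)) \<longlonglongrightarrow> th (x^p)" by (rule filterlim_compose[OF l filterlim_subseq[OF sm]])
    show "(\<lambda>N. FF N (x^p) ^ p) \<longlonglongrightarrow> th (x^p) ^ p" by (rule tendsto_power[OF l])
  qed
  have "(\<lambda>N. (\<Prod>u<p. FF (p*N) (zeta p ^ u * x)) * FF N (x^(p*p))) = (\<lambda>N. FF (p*N) (x^p) * FF N (x^p) ^ p)"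
    using FF_T[OF p] by (intro ext) simp
  with l1 have l1': "(\<lambda>N. FF (p*N) (x^p) * FF N (x^p) ^ p) \<longlonglongrightarrow> (\<Prod>u<p. th (zeta p ^ u * x)) * th (x^(p*p))"
    by (simp only:)
  have "(\<Prod>u<p. th (zeta p ^ u * x)) * th (x^(p*p)) = th (x^p) * th (x^p) ^ p"
    by (rule LIMSEQ_unique[OF l1' l2])
  thus ?thesis by simp
qed

lemma theta3_th: "theta3 \<tau> = th (exp (of_real pi * \<i> * \<tau>))"
proof -
  have "exp (complex_of_real pi * \<i> * of_nat ((Suc \<nu>)^2) * \<tau>) = exp (of_real pi * \<i> * \<tau>) ^ ((Suc \<nu>)^2)" for \<nu>
    by (simp add: exp_of_nat_mult[symmetric] mult_ac)
  thus ?thesis by (simp add: theta3_def th_def)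
qed

lemma norm_exp_tau: "Im \<tau> > 0 \<Longrightarrow> norm (exp (of_real pi * \<i> * \<tau>)) < 1"
  by (simp add: norm_exp_eq_Re)

lemma theta3_nz: "Im \<tau> > 0 \<Longrightarrow> theta3 \<tau> \<noteq> 0"
  unfolding theta3_th by (rule FF_lim(2)) (simp_all add: norm_exp_tau)

lemma theta3_periodic: "theta3 (\<tau> + 2 * of_nat k) = theta3 \<tau>"
proof -
  have "exp (of_real pi * \<i> * (\<tau> + 2 * of_nat k)) = exp (of_real pi * \<i> * \<tau>) * exp (2 * of_real pi * \<i>) ^ k"
  proof -
    have "of_real pi * \<i> * (\<tau> + 2 * of_nat k) = of_real pi * \<i> * \<tau> + of_nat k * (2 * of_real pi * \<i>)"
      by (simp add: algebra_simps)
    thus ?thesis by (simp only: exp_add exp_of_nat_mult)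
  qed
  thus ?thesis unfolding theta3_th by simp
qed

lemma theta3_T:
  assumes p: "prime p" "odd p" and tau: "Im \<tau> > 0"
  shows "theta3 (of_nat p * \<tau>) * (\<Prod>u<p. theta3 ((\<tau> + 2 * of_nat u) / of_nat p)) = theta3 \<tau> ^ Suc p"
proof -
  have p0: "p > 0" using p prime_gt_0_nat by blast
  define x where "x = exp (of_real pi * \<i> * (\<tau> / of_nat p))"
  have x: "norm x < 1" "x \<noteq> 0" unfolding x_def using tau p0
    by (auto intro!: norm_exp_tau simp: Im_divide_of_nat)
  have e1: "exp (of_real pi * \<i> * ((\<tau> + 2 * of_nat u) / of_nat p)) = zeta p ^ u * x" for u
  proof -
    have "of_real pi * \<i> * ((\<tau> + 2 * of_nat u) / of_nat p) = of_nat u * (2 * of_real pi * \<i> / of_nat p) + of_real pi * \<i> * (\<tau> / of_nat p)"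
      by (simp add: add_divide_distrib algebra_simps)
    thus ?thesis unfolding zeta_def x_def by (simp only: exp_add exp_of_nat_mult)
  qed
  have e2: "exp (of_real pi * \<i> * (of_nat p * \<tau>)) = x ^ (p * p)"
    unfolding x_def exp_of_nat_mult[symmetric] using p0 by (simp add: field_simps)
  have e3: "exp (of_real pi * \<i> * \<tau>) = x ^ p"
    unfolding x_def exp_of_nat_mult[symmetric] using p0 by (simp add: field_simps)
  show ?thesis using th_T[OF p x] unfolding theta3_th e1 e2 e3 by (simp add: mult.commute)
qed



definition DD :: "nat \<Rightarrow> nat \<Rightarrow> complex \<Rightarrow> complex" where
  "DD p k \<sigma> = (\<Prod>v<p^k. theta3 ((\<sigma> + 2 * of_nat v) / of_nat (p^k)))"

definition AA :: "nat \<Rightarrow> nat \<Rightarrow> complex \<Rightarrow> complex" where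
  "AA p l \<tau> = (\<Prod>j\<le>l. DD p j (of_nat (p^(l-j)) * \<tau>))"

lemma DD_shift:
  assumes p: "p > 0"
  shows "DD p k (\<sigma> + 2 * of_nat c) = DD p k \<sigma>"
proof -
  define P where "P = p^k"
  have P: "P > 0" using p by (simp add: P_def)
  define g where "g v = theta3 ((\<sigma> + 2 * of_nat v) / of_nat P)" for v
  have gper: "g v = g (v mod P)" for v
  proof -
    have "(of_nat v :: complex) = of_nat (v mod P + P * (v div P))" by simp
    hence "(of_nat v :: complex) = of_nat (v mod P) + of_nat P * of_nat (v div P)" by (simp only: of_nat_add of_nat_mult)
    hence "(\<sigma> + 2 * of_nat v) / of_nat P = (\<sigma> + 2 * of_nat (v mod P)) / of_nat P + 2 * of_nat (v div P)"
      using P by (simp add: field_simps)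
    thus ?thesis unfolding g_def by (simp add: theta3_periodic)
  qed
  define h where "h v = (c + v) mod P" for v
  have inj: "inj_on h {..<P}"
  proof (rule inj_onI)
    fix v w assume vw: "v \<in> {..<P}" "w \<in> {..<P}" "h v = h w"
    have key: "a = b" if ab: "a < P" "b < P" "a \<le> b" "(c + a) mod P = (c + b) mod P" for a b
    proof -
      have "P dvd (c + b) - (c + a)" using mod_eq_dvd_iff_nat[of "c + a" "c + b" P] ab by simp
      hence "P dvd b - a" by simp
      moreover have "b - a < P" using ab by simp
      ultimately have "b - a = 0" by (metis dvd_imp_le not_le zero_less_iff_neq_zero)
      thus "a = b" using ab by simp
    qed
    show "v = w" using key[of v w] key[of w v] vw by (cases "v \<le> w") (auto simp: h_def)
  qed
  have img: "h ` {..<P} = {..<P}"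
    by (rule endo_inj_surj[OF _ _ inj]) (auto simp: h_def P)
  have "DD p k (\<sigma> + 2 * of_nat c) = (\<Prod>v<P. g (c + v))"
    unfolding DD_def P_def[symmetric] g_def by (intro prod.cong refl) (simp add: algebra_simps)
  also have "\<dots> = (\<Prod>v<P. g (h v))" by (simp add: h_def gper[of "c + _"])
  also have "\<dots> = (\<Prod>v\<in>h ` {..<P}. g v)" by (simp add: prod.reindex[OF inj])
  also have "\<dots> = (\<Prod>v<P. g v)" by (simp only: img)
  also have "\<dots> = DD p k \<sigma>" unfolding DD_def P_def g_def ..
  finally show ?thesis .
qed

lemma prod_block: fixes p n :: nat shows "(\<Prod>w<p*n. f w) = (\<Prod>v<n. \<Prod>u<p. f (p * v + u))"
proof (induction n)
  case 0 thus ?case by simp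
next
  case (Suc n)
  have "(\<Prod>w<p*Suc n. f w) = (\<Prod>w<p*n + p. f w)" by (simp add: add.commute)
  also have "\<dots> = (\<Prod>w<p*n. f w) * (\<Prod>u<p. f (p * n + u))" by (rule prod_lessThan_add)
  finally show ?case using Suc by simp
qed

lemma DD_top:
  assumes p: "p > 0"
  shows "(\<Prod>u<p. DD p l ((\<tau> + 2 * of_nat u) / of_nat p)) = DD p (Suc l) \<tau>"
proof -
  have "DD p (Suc l) \<tau> = (\<Prod>v<p^l. \<Prod>u<p. theta3 ((\<tau> + 2 * of_nat (p * v + u)) / of_nat (p * p^l)))"
    unfolding DD_def power_Suc by (rule prod_block)
  also have "\<dots> = (\<Prod>u<p. \<Prod>v<p^l. theta3 ((\<tau> + 2 * of_nat (p * v + u)) / of_nat (p * p^l)))"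
    by (rule prod.swap)
  also have "\<dots> = (\<Prod>u<p. DD p l ((\<tau> + 2 * of_nat u) / of_nat p))"
    unfolding DD_def
  proof (intro prod.cong refl arg_cong[where f=theta3])
    fix u v
    show "(\<tau> + 2 * of_nat (p * v + u)) / of_nat (p * p^l) = ((\<tau> + 2 * of_nat u) / of_nat p + 2 * of_nat v) / of_nat (p^l)"
      using p by (simp add: field_simps)
  qed
  finally show ?thesis ..
qed

lemma AA_rec:
  assumes p: "p > 0"
  shows "AA p (Suc (Suc m)) \<tau> * AA p m \<tau> ^ p = AA p (Suc m) (of_nat p * \<tau>) * (\<Prod>u<p. AA p (Suc m) ((\<tau> + 2 * of_nat u) / of_nat p))"
proof -
  define X where "X = (\<Prod>j\<le>Suc m. DD p j (of_nat (p^(Suc (Suc m) - j)) * \<tau>))"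
  define Y where "Y = (\<Prod>j\<le>m. DD p j (of_nat (p^(m-j)) * \<tau>) ^ p)"
  have a: "AA p (Suc m) (of_nat p * \<tau>) = X"
    unfolding AA_def X_def
  proof (intro prod.cong refl)
    fix j assume "j \<in> {..Suc m}"
    hence "Suc (Suc m) - j = Suc (Suc m - j)" by simp
    thus "DD p j (of_nat (p ^ (Suc m - j)) * (of_nat p * \<tau>)) = DD p j (of_nat (p ^ (Suc (Suc m) - j)) * \<tau>)"
      by (simp add: mult_ac)
  qed
  have b: "AA p (Suc (Suc m)) \<tau> = X * DD p (Suc (Suc m)) \<tau>"
    unfolding AA_def X_def by (simp add: prod.atMost_Suc[of _ "Suc m"])
  have c: "(\<Prod>u<p. AA p (Suc m) ((\<tau> + 2 * of_nat u) / of_nat p)) = Y * DD p (Suc (Suc m)) \<tau>"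
  proof -
    have "(\<Prod>u<p. AA p (Suc m) ((\<tau> + 2 * of_nat u) / of_nat p))
        = (\<Prod>j\<le>Suc m. \<Prod>u<p. DD p j (of_nat (p^(Suc m - j)) * ((\<tau> + 2 * of_nat u) / of_nat p)))"
      unfolding AA_def by (rule prod.swap)
    also have "\<dots> = (\<Prod>j\<le>m. \<Prod>u<p. DD p j (of_nat (p^(Suc m - j)) * ((\<tau> + 2 * of_nat u) / of_nat p)))
                  * (\<Prod>u<p. DD p (Suc m) ((\<tau> + 2 * of_nat u) / of_nat p))"
      by (simp add: prod.atMost_Suc[of _ m])
    also have "(\<Prod>u<p. DD p (Suc m) ((\<tau> + 2 * of_nat u) / of_nat p)) = DD p (Suc (Suc m)) \<tau>"
      by (rule DD_top[OF p])
    also have "(\<Prod>j\<le>m. \<Prod>u<p. DD p j (of_nat (p^(Suc m - j)) * ((\<tau> + 2 * of_nat u) / of_nat p))) = Y"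
      unfolding Y_def
    proof (intro prod.cong refl)
      fix j assume "j \<in> {..m}"
      hence j: "Suc m - j = Suc (m - j)" by simp
      have "(\<Prod>u<p. DD p j (of_nat (p^(Suc m - j)) * ((\<tau> + 2 * of_nat u) / of_nat p)))
          = (\<Prod>u<p. DD p j (of_nat (p^(m-j)) * \<tau>))"
      proof (intro prod.cong refl)
        fix u
        have e: "of_nat (p^(Suc m - j)) * ((\<tau> + 2 * of_nat u) / of_nat p) = of_nat (p^(m-j)) * \<tau> + 2 * of_nat (p^(m-j) * u)"
          unfolding j using p by (simp add: field_simps)
        show "DD p j (of_nat (p^(Suc m - j)) * ((\<tau> + 2 * of_nat u) / of_nat p)) = DD p j (of_nat (p^(m-j)) * \<tau>)"
          unfolding e by (rule DD_shift[OF p])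
      qed
      also have "\<dots> = DD p j (of_nat (p^(m-j)) * \<tau>) ^ p" by simp
      finally show "(\<Prod>u<p. DD p j (of_nat (p^(Suc m - j)) * ((\<tau> + 2 * of_nat u) / of_nat p))) = DD p j (of_nat (p^(m-j)) * \<tau>) ^ p" .
    qed
    finally show ?thesis .
  qed
  have d: "AA p m \<tau> ^ p = Y" unfolding AA_def Y_def by (rule prod_power_distrib)
  show ?thesis unfolding a b c d by (simp add: mult_ac)
qed



definition sig :: "nat \<Rightarrow> nat \<Rightarrow> nat" where "sig p n = (\<Sum>i\<le>n. p^i)"

lemma sig_0 [simp]: "sig p 0 = 1" by (simp add: sig_def)

lemma sig_Suc: "sig p (Suc n) = 1 + p * sig p n"
  unfolding sig_def by (subst sum.atMost_Suc_shift) (simp add: sum_distrib_left)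

lemma sig_SS: "sig p (Suc (Suc m)) = sig p m + p^(Suc m) + p^(Suc (Suc m))"
  unfolding sig_def by simp

lemma DD_0 [simp]: "DD p 0 \<sigma> = theta3 \<sigma>"
  by (simp add: DD_def)

lemma Im_pos:
  assumes "Im \<tau> > 0" "p > 0"
  shows "Im (of_nat p * \<tau>) > 0" "Im ((\<tau> + 2 * of_nat u) / of_nat p) > 0"
  using assms by (simp_all add: Im_divide_of_nat)

lemma AA_1:
  assumes p: "prime p" "odd p" and tau: "Im \<tau> > 0"
  shows "AA p 1 \<tau> = theta3 \<tau> ^ Suc p"
proof -
  have "AA p 1 \<tau> = theta3 (of_nat p * \<tau>) * (\<Prod>u<p. theta3 ((\<tau> + 2 * of_nat u) / of_nat p))"
    by (simp add: AA_def DD_def)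
  thus ?thesis using theta3_T[OF p tau] by simp
qed

lemma AA_pow:
  assumes p: "prime p" "odd p"
  shows "\<forall>\<tau>. Im \<tau> > 0 \<longrightarrow> AA p n \<tau> = theta3 \<tau> ^ sig p n \<and> AA p (Suc n) \<tau> = theta3 \<tau> ^ sig p (Suc n)"
proof (induction n)
  case 0
  show ?case using AA_1[OF p] by (simp add: AA_def sig_Suc)
next
  case (Suc m)
  have p0: "p > 0" using p prime_gt_0_nat by blast
  show ?case
  proof (intro allI impI conjI)
    fix \<tau> :: complex assume tau: "Im \<tau> > 0"
    show "AA p (Suc m) \<tau> = theta3 \<tau> ^ sig p (Suc m)" using Suc tau by blast
    have IH1: "AA p m \<tau> = theta3 \<tau> ^ sig p m" using Suc tau by blast
    have IH2: "AA p (Suc m) \<sigma> = theta3 \<sigma> ^ sig p (Suc m)" if "Im \<sigma> > 0" for \<sigma> using Suc that by blast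
    have "AA p (Suc (Suc m)) \<tau> * (theta3 \<tau> ^ sig p m) ^ p
          = theta3 (of_nat p * \<tau>) ^ sig p (Suc m) * (\<Prod>u<p. theta3 ((\<tau> + 2 * of_nat u) / of_nat p) ^ sig p (Suc m))"
      using AA_rec[OF p0, of m \<tau>] IH1 IH2 Im_pos[OF tau p0] by simp
    also have "\<dots> = (theta3 (of_nat p * \<tau>) * (\<Prod>u<p. theta3 ((\<tau> + 2 * of_nat u) / of_nat p))) ^ sig p (Suc m)"
      by (simp add: power_mult_distrib prod_power_distrib)
    also have "\<dots> = theta3 \<tau> ^ (Suc p * sig p (Suc m))" unfolding theta3_T[OF p tau] by (simp only: power_mult)
    also have "Suc p * sig p (Suc m) = sig p (Suc (Suc m)) + sig p m * p"
      by (simp add: sig_Suc algebra_simps)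
    finally have "AA p (Suc (Suc m)) \<tau> * theta3 \<tau> ^ (sig p m * p) = theta3 \<tau> ^ sig p (Suc (Suc m)) * theta3 \<tau> ^ (sig p m * p)"
      by (simp add: power_add power_mult)
    thus "AA p (Suc (Suc m)) \<tau> = theta3 \<tau> ^ sig p (Suc (Suc m))"
      using theta3_nz[OF tau] by simp
  qed
qed

definition PP :: "nat \<Rightarrow> nat \<Rightarrow> complex \<Rightarrow> complex" where
  "PP p l \<tau> = (\<Prod>j\<in>{0..l}. \<Prod>v\<in>{v. v < p^j \<and> gcd (gcd (p^(l-j)) v) (p^j) = 1}.
            theta3 ((of_nat (p^(l-j)) * \<tau> + 2 * of_nat v) / of_nat (p^j)))"

lemma gcd_cond:
  fixes p a b v :: nat
  assumes p: "prime p" and a: "a > 0" and b: "b > 0"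
  shows "gcd (gcd (p^a) v) (p^b) = 1 \<longleftrightarrow> \<not> p dvd v"
proof
  assume g: "gcd (gcd (p^a) v) (p^b) = 1"
  show "\<not> p dvd v"
  proof
    assume "p dvd v"
    moreover have "p dvd p^a" "p dvd p^b" using a b by (simp_all add: dvd_power)
    ultimately have "p dvd gcd (gcd (p^a) v) (p^b)" by (intro gcd_greatest)
    thus False using g p by simp
  qed
next
  assume "\<not> p dvd v"
  hence "coprime p v" using p by (simp add: prime_imp_coprime)
  hence "coprime (p^a) v" by simp
  thus "gcd (gcd (p^a) v) (p^b) = 1" by simp
qed

lemma PP_1:
  assumes "p > 0"
  shows "PP p 1 \<tau> = AA p 1 \<tau>"
proof -
  have s0: "{v. v < p^0 \<and> gcd (gcd (p^(1-0)) v) (p^0) = 1} = {0}" by auto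
  have s1: "{v. v < p^1 \<and> gcd (gcd (p^(1-1)) v) (p^1) = 1} = {..<p}" by auto
  have "PP p 1 \<tau> = theta3 (of_nat p * \<tau>) * (\<Prod>v<p. theta3 ((\<tau> + 2 * of_nat v) / of_nat p))"
    unfolding PP_def by (simp add: atLeast0AtMost atMost_Suc s0[simplified] s1[simplified])
  also have "\<dots> = AA p 1 \<tau>" by (simp add: AA_def DD_def)
  finally show ?thesis .
qed

lemma PP_AA:
  assumes p: "prime p"
  shows "PP p (Suc (Suc m)) \<tau> * AA p m \<tau> = AA p (Suc (Suc m)) \<tau>"
proof -
  have p0: "p > 0" using p prime_gt_0_nat by blast
  define l where "l = Suc (Suc m)"
  define S where "S j = {v. v < p^j \<and> gcd (gcd (p^(l-j)) v) (p^j) = 1}" for j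
  define g where "g j v = theta3 ((of_nat (p^(l-j)) * \<tau> + 2 * of_nat v) / of_nat (p^j))" for j v
  define R where "R j = (if 0 < j \<and> j < l then DD p (j - 1) (of_nat (p^(m - (j - 1))) * \<tau>) else 1)" for j
  have split: "DD p j (of_nat (p^(l-j)) * \<tau>) = (\<Prod>v\<in>S j. g j v) * R j" if j: "j \<le> l" for j
  proof -
    have D: "DD p j (of_nat (p^(l-j)) * \<tau>) = (\<Prod>v<p^j. g j v)" by (simp add: DD_def g_def)
    show ?thesis
    proof (cases "0 < j \<and> j < l")
      case False
      hence "j = 0 \<or> j = l" using j by auto
      hence "S j = {..<p^j}" by (auto simp: S_def)
      moreover have "R j = 1" unfolding R_def by (rule if_not_P[OF False])
      ultimately show ?thesis using D by simp
    next
      case True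
      then obtain i where i: "j = Suc i" by (cases j) auto
      have Sj: "S j = {v. v < p^j \<and> \<not> p dvd v}"
        unfolding S_def using gcd_cond[OF p, of "l - j" j] True by auto
      define M where "M = {v. v < p^j \<and> p dvd v}"
      have un: "{..<p^j} = S j \<union> M" "S j \<inter> M = {}" by (auto simp: Sj M_def)
      have fin: "finite (S j)" "finite M" by (auto simp: Sj M_def)
      have "(\<Prod>v<p^j. g j v) = (\<Prod>v\<in>S j. g j v) * (\<Prod>v\<in>M. g j v)"
        unfolding un(1) by (rule prod.union_disjoint[OF fin un(2)])
      moreover have "(\<Prod>v\<in>M. g j v) = R j"
      proof -
        have Mi: "M = (\<lambda>w. p * w) ` {..<p^i}"
        proof (intro equalityI subsetI)
          fix v assume "v \<in> M"
          then obtain w where w: "v = p * w" "p * w < p * p^i" by (auto simp: M_def i elim!: dvdE)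
          thus "v \<in> (\<lambda>w. p * w) ` {..<p^i}" using p0 by auto
        next
          fix v assume "v \<in> (\<lambda>w. p * w) ` {..<p^i}"
          then obtain w where "w < p^i" "v = p * w" by auto
          thus "v \<in> M" using p0 by (auto simp: M_def i)
        qed
        have inj: "inj_on (\<lambda>w. p * w) {..<p^i}" using p0 by (auto simp: inj_on_def)
        have "(\<Prod>v\<in>M. g j v) = (\<Prod>w<p^i. g j (p * w))" unfolding Mi by (simp add: prod.reindex[OF inj])
        also have "\<dots> = DD p i (of_nat (p^(m - i)) * \<tau>)"
          unfolding DD_def g_def
        proof (intro prod.cong refl arg_cong[where f=theta3])
          fix w
          have e1: "l - Suc i = Suc (m - i)" using True i by (simp add: l_def)
          show "(of_nat (p^(l-j)) * \<tau> + 2 * of_nat (p * w)) / of_nat (p^j) = (of_nat (p^(m - i)) * \<tau> + 2 * of_nat w) / of_nat (p^i)"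
            unfolding i e1 using p0 by (simp add: field_simps)
        qed
        also have "\<dots> = R j" using True by (simp add: R_def i)
        finally show ?thesis .
      qed
      ultimately show ?thesis using D by simp
    qed
  qed
  have "AA p l \<tau> = (\<Prod>j\<le>l. (\<Prod>v\<in>S j. g j v) * R j)"
    unfolding AA_def by (intro prod.cong refl split) auto
  also have "\<dots> = PP p l \<tau> * (\<Prod>j\<le>l. R j)"
    by (simp add: prod.distrib PP_def S_def g_def atLeast0AtMost)
  also have "(\<Prod>j\<le>l. R j) = AA p m \<tau>"
  proof -
    have "(\<Prod>j\<le>l. R j) = R 0 * ((\<Prod>i\<le>m. R (Suc i)) * R (Suc (Suc m)))"
      unfolding l_def prod.atMost_Suc_shift[of R "Suc m"] prod.atMost_Suc[of "\<lambda>i. R (Suc i)" m] by (rule refl)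
    also have "\<dots> = (\<Prod>i\<le>m. R (Suc i))" by (simp add: R_def l_def)
    also have "\<dots> = AA p m \<tau>" unfolding AA_def by (intro prod.cong refl) (auto simp: R_def l_def)
    finally show ?thesis .
  qed
  finally show ?thesis by (simp add: l_def mult.commute)
qed

lemma psi_prime_power:
  assumes p: "prime p" and l: "l \<ge> 1"
  shows "dedekind_psi (p^l) = p^l + p^(l-1)"
proof -
  have pf: "prime_factors (p^l) = {p}"
  proof (intro equalityI subsetI)
    fix q assume "q \<in> prime_factors (p^l)"
    hence q: "prime q" "q dvd p^l" by (auto simp: in_prime_factors_iff)
    hence "q dvd p" using prime_dvd_power by blast
    thus "q \<in> {p}" using q p by (simp add: primes_dvd_imp_eq)
  next
    fix q assume "q \<in> {p}"
    thus "q \<in> prime_factors (p^l)" using p l by (auto simp: in_prime_factors_iff dvd_power prime_gt_0_nat)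
  qed
  have p0: "p > 0" using p prime_gt_0_nat by blast
  have h: "(of_nat (p^l) :: rat) * (1 + 1 / of_nat p) = of_nat (p^l + p^(l-1))"
  proof -
    have "p^l = p * p^(l-1)" using l by (simp add: power_eq_if)
    thus ?thesis using p0 by (simp add: field_simps)
  qed
  have sg: "(\<Prod>q\<in>{p}. 1 + 1 / (of_nat q :: rat)) = 1 + 1 / of_nat p" by simp
  show ?thesis unfolding dedekind_psi_def pf sg h floor_of_nat nat_int ..
qed

theorem lemma2p3:
  fixes p l :: nat and \<tau> :: complex
  assumes "prime p" and "odd p" and "l \<ge> 1" and "Im \<tau> > 0"
  shows "(\<Prod>j\<in>{0..l}. \<Prod>v\<in>{v. v < p^j \<and> gcd (gcd (p^(l-j)) v) (p^j) = 1}.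
            theta3 ((of_nat (p^(l-j)) * \<tau> + 2 * of_nat v) / of_nat (p^j)))
         = theta3 \<tau> ^ dedekind_psi (p^l)"
proof -
  have p: "prime p" "odd p" using assms by auto
  have p0: "p > 0" using p prime_gt_0_nat by blast
  note pow = AA_pow[OF p]
  have "PP p l \<tau> = theta3 \<tau> ^ (p^l + p^(l-1))"
  proof (cases "l = 1")
    case True
    have "PP p 1 \<tau> = theta3 \<tau> ^ sig p 1" using PP_1[OF p0] pow[of 0] assms(4) by simp
    thus ?thesis using True by (simp add: sig_Suc)
  next
    case False
    then obtain m where m: "l = Suc (Suc m)" using assms(3) by (metis One_nat_def Suc_le_D le_SucE not_less_eq_eq le_add1 Suc_eq_plus1 nat.exhaust)
    have "PP p l \<tau> * theta3 \<tau> ^ sig p m = theta3 \<tau> ^ sig p l"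
      using PP_AA[OF p(1), of m \<tau>] pow[of m] pow[of "Suc m"] assms(4) m by simp
    also have "sig p l = (p^l + p^(l-1)) + sig p m" unfolding m sig_SS by simp
    finally have "PP p l \<tau> * theta3 \<tau> ^ sig p m = theta3 \<tau> ^ (p^l + p^(l-1)) * theta3 \<tau> ^ sig p m"
      by (simp add: power_add)
    thus ?thesis using theta3_nz[OF assms(4)] by simp
  qed
  thus ?thesis unfolding PP_def psi_prime_power[OF p(1) assms(3)] .
qed


end
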